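(* For every positive integer $d$, the hypercube $Q_d$ satisfies $\chi_{\mathrm{so}}(Q_d)=2$ if $d$ is odd and $\chi_{\mathrm{so}}(Q_d)=4$ if $d$ is even.
   Context: $Q_d$ has vertex set $\{0,1\}^d$, two vertices adjacent iff they differ in exactly one coordinate. A strong odd coloring of a graph is a proper vertex coloring such that for each vertex $v$ every color appearing on the open neighborhood $N(v)$ occurs an odd number of times on $N(v)$; $\chi_{\mathrm{so}}$ is the minimum number of colors. *)

theory Defs
  imports Main
begin

text \<open>A graph is given by a vertex set V and a symmetric irreflexive adjacency
relation E (only its restriction to V matters). Open neighbourhood of v:\<close>

definition nbhd :: "'a set \<Rightarrow> ('a \<Rightarrow> 'a \<Rightarrow> bool) \<Rightarrow> 'a \<Rightarrow> 'a set" where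
  "nbhd V E v = {u \<in> V. E v u}"

definition proper_coloring :: "'a set \<Rightarrow> ('a \<Rightarrow> 'a \<Rightarrow> bool) \<Rightarrow> ('a \<Rightarrow> 'c) \<Rightarrow> bool" where
  "proper_coloring V E c \<longleftrightarrow> (\<forall>u\<in>V. \<forall>v\<in>V. E u v \<longrightarrow> c u \<noteq> c v)"

definition strong_odd_coloring :: "'a set \<Rightarrow> ('a \<Rightarrow> 'a \<Rightarrow> bool) \<Rightarrow> ('a \<Rightarrow> 'c) \<Rightarrow> bool" where
  "strong_odd_coloring V E c \<longleftrightarrow> proper_coloring V E c \<and>
     (\<forall>v\<in>V. \<forall>a \<in> c ` nbhd V E v. odd (card {u \<in> nbhd V E v. c u = a}))"

definition chi_so :: "'a set \<Rightarrow> ('a \<Rightarrow> 'a \<Rightarrow> bool) \<Rightarrow> nat" where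
  "chi_so V E = (LEAST k. \<exists>c :: 'a \<Rightarrow> nat. c ` V \<subseteq> {..<k} \<and> strong_odd_coloring V E c)"

definition cube_vertices :: "nat \<Rightarrow> bool list set" where
  "cube_vertices d = {xs. length xs = d}"

definition cube_adj :: "bool list \<Rightarrow> bool list \<Rightarrow> bool" where
  "cube_adj xs ys \<longleftrightarrow> length xs = length ys \<and>
     card {i. i < length xs \<and> xs ! i \<noteq> ys ! i} = 1"

end

theory Submission
  imports Defs
begin

definition flip :: "nat \<Rightarrow> bool list \<Rightarrow> bool list" where
  "flip i xs = xs[i := \<not> xs ! i]"

lemma length_flip[simp]: "length (flip i xs) = length xs"
  by (simp add: flip_def)

lemma flip_flip[simp]: "flip i (flip i xs) = xs"
  by (cases "i < length xs") (auto simp: flip_def list_update_beyond)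

lemma flip_comm: "i \<noteq> j \<Longrightarrow> flip i (flip j xs) = flip j (flip i xs)"
  by (simp add: flip_def list_update_swap)

lemma flip_nth: "k < length xs \<Longrightarrow> flip i xs ! k = (if k = i then \<not> xs ! k else xs ! k)"
  by (simp add: flip_def)

lemma adj_iff: "cube_adj xs ys \<longleftrightarrow> length ys = length xs \<and> (\<exists>i<length xs. ys = flip i xs)"
proof
  assume a: "cube_adj xs ys"
  then have l: "length ys = length xs" and c: "card {i. i < length xs \<and> xs ! i \<noteq> ys ! i} = 1"
    by (auto simp: cube_adj_def)
  from c obtain i where s: "{i. i < length xs \<and> xs ! i \<noteq> ys ! i} = {i}"
    by (auto simp: card_1_singleton_iff)
  then have i: "i < length xs" "xs ! i \<noteq> ys ! i" by auto
  have o: "\<And>j. j < length xs \<Longrightarrow> j \<noteq> i \<Longrightarrow> xs ! j = ys ! j" using s by blast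
  have "ys = flip i xs"
    by (rule nth_equalityI) (use l i o in \<open>auto simp: flip_nth\<close>)
  then show "length ys = length xs \<and> (\<exists>i<length xs. ys = flip i xs)" using l i by auto
next
  assume "length ys = length xs \<and> (\<exists>i<length xs. ys = flip i xs)"
  then obtain i where i: "i < length xs" "ys = flip i xs" by auto
  have "{k. k < length xs \<and> xs ! k \<noteq> ys ! k} = {i}"
    using i by (auto simp: flip_nth split: if_splits)
  then show "cube_adj xs ys" using i by (simp add: cube_adj_def)
qed

lemma nbhd_eq: "length v = d \<Longrightarrow> nbhd (cube_vertices d) cube_adj v = (\<lambda>i. flip i v) ` {..<d}"
  by (auto simp: nbhd_def cube_vertices_def adj_iff)

lemma inj_flip: "length v = d \<Longrightarrow> inj_on (\<lambda>i. flip i v) {..<d}"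
proof (rule inj_onI)
  fix i j assume "length v = d" "i \<in> {..<d}" "j \<in> {..<d}" "flip i v = flip j v"
  then show "i = j"
    by (metis flip_nth lessThan_iff)
qed

lemma card_nb:
  assumes "length v = d"
  shows "card {u \<in> nbhd (cube_vertices d) cube_adj v. c u = a} = card {i\<in>{..<d}. c (flip i v) = a}"
proof -
  have "{u \<in> nbhd (cube_vertices d) cube_adj v. c u = a} = (\<lambda>i. flip i v) ` {i\<in>{..<d}. c (flip i v) = a}"
    using assms by (auto simp: nbhd_eq)
  moreover have "inj_on (\<lambda>i. flip i v) {i\<in>{..<d}. c (flip i v) = a}"
    using inj_flip[OF assms] by (rule inj_on_subset) auto
  ultimately show ?thesis by (simp add: card_image)
qed

lemma so_iff:
  "strong_odd_coloring (cube_vertices d) cube_adj c \<longleftrightarrow>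
   (\<forall>v. length v = d \<longrightarrow> (\<forall>i<d. c (flip i v) \<noteq> c v) \<and>
      (\<forall>i<d. odd (card {j\<in>{..<d}. c (flip j v) = c (flip i v)})))"
proof -
  have p: "proper_coloring (cube_vertices d) cube_adj c \<longleftrightarrow> (\<forall>v. length v = d \<longrightarrow> (\<forall>i<d. c (flip i v) \<noteq> c v))"
    unfolding proper_coloring_def cube_vertices_def adj_iff by (auto simp: flip_nth; metis length_flip)
  have q: "(\<forall>v\<in>cube_vertices d. \<forall>a \<in> c ` nbhd (cube_vertices d) cube_adj v. odd (card {u \<in> nbhd (cube_vertices d) cube_adj v. c u = a}))
     \<longleftrightarrow> (\<forall>v. length v = d \<longrightarrow> (\<forall>i<d. odd (card {j\<in>{..<d}. c (flip j v) = c (flip i v)})))"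
  proof -
    have "(\<forall>a \<in> c ` nbhd (cube_vertices d) cube_adj v. odd (card {u \<in> nbhd (cube_vertices d) cube_adj v. c u = a}))
      \<longleftrightarrow> (\<forall>i<d. odd (card {j\<in>{..<d}. c (flip j v) = c (flip i v)}))" if "length v = d" for v
    proof -
      have "c ` nbhd (cube_vertices d) cube_adj v = (\<lambda>i. c (flip i v)) ` {..<d}"
        using nbhd_eq[OF that] by auto
      then show ?thesis by (simp add: card_nb[OF that]) blast
    qed
    then show ?thesis by (auto simp: cube_vertices_def)
  qed
  show ?thesis unfolding strong_odd_coloring_def p q by blast
qed

lemma sym_sum:
  fixes g :: "nat \<Rightarrow> nat \<Rightarrow> nat"
  assumes "\<And>i j. g i j = g j i"
  shows "(\<Sum>i<n. \<Sum>j<n. g i j) = (\<Sum>i<n. g i i) + 2 * (\<Sum>i<n. \<Sum>j<i. g i j)"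
proof (induction n)
  case 0 then show ?case by simp
next
  case (Suc n)
  have "(\<Sum>i<Suc n. \<Sum>j<Suc n. g i j) = (\<Sum>i<n. \<Sum>j<n. g i j) + (\<Sum>i<n. g i n) + (\<Sum>j<n. g n j) + g n n"
    by (simp add: sum.distrib)
  also have "(\<Sum>i<n. g i n) = (\<Sum>j<n. g n j)" using assms by simp
  finally show ?case using Suc by simp
qed

definition cnt :: "(bool list \<Rightarrow> nat) \<Rightarrow> nat \<Rightarrow> nat \<Rightarrow> bool list \<Rightarrow> nat" where
  "cnt c d b w = card {i\<in>{..<d}. c (flip i w) = b}"

lemma cnt_sum: "cnt c d b w = (\<Sum>i<d. if c (flip i w) = b then 1 else 0)"
  unfolding cnt_def by (simp add: sum.inter_filter[symmetric])

lemma cnt_compl: "card {i\<in>{..<d}. c (flip i w) \<noteq> b} + cnt c d b w = d"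
proof -
  have "{..<d} = {i\<in>{..<d}. c (flip i w) \<noteq> b} \<union> {i\<in>{..<d}. c (flip i w) = b}" by auto
  then have "d = card ({i\<in>{..<d}. c (flip i w) \<noteq> b} \<union> {i\<in>{..<d}. c (flip i w) = b})"
    by (metis card_lessThan)
  also have "\<dots> = card {i\<in>{..<d}. c (flip i w) \<noteq> b} + cnt c d b w"
    unfolding cnt_def by (rule card_Un_disjoint) auto
  finally show ?thesis by simp
qed

lemma three: "(x::nat) < 3 \<Longrightarrow> b < 3 \<Longrightarrow> y < 3 \<Longrightarrow> b \<noteq> y \<Longrightarrow> x \<noteq> y \<Longrightarrow> x = b \<or> x = 3 - b - y"
  by (auto simp: less_Suc_eq numeral_3_eq_3)

lemma three': "b < 3 \<Longrightarrow> (y::nat) < 3 \<Longrightarrow> b \<noteq> y \<Longrightarrow> 3 - b - y \<noteq> b"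
  by (auto simp: less_Suc_eq numeral_3_eq_3)

lemma no3:
  fixes c :: "bool list \<Rightarrow> nat"
  assumes ev: "even d" and d1: "d \<ge> 1"
    and so: "strong_odd_coloring (cube_vertices d) cube_adj c"
    and lt: "\<And>v. length v = d \<Longrightarrow> c v < 3"
  shows False
proof -
  have pr: "\<And>v i. length v = d \<Longrightarrow> i < d \<Longrightarrow> c (flip i v) \<noteq> c v"
   and od: "\<And>v i. length v = d \<Longrightarrow> i < d \<Longrightarrow> odd (cnt c d (c (flip i v)) v)"
    using so unfolding so_iff cnt_def by auto
  have P: "odd (cnt c d b w) \<longleftrightarrow> c w \<noteq> b" if w: "length w = d" and b: "b < 3" for w b
  proof (cases "c w = b")
    case True
    have e0: "{i\<in>{..<d}. c (flip i w) = b} = {}" using pr[OF w] True by auto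
    show ?thesis using True unfolding cnt_def e0 by simp
  next
    case False
    define b' where "b' = 3 - b - c w"
    have cw: "c w < 3" using lt[OF w] .
    have nb: "\<And>i. i < d \<Longrightarrow> c (flip i w) = b \<or> c (flip i w) = b'"
    proof -
      fix i assume i: "i < d"
      have "c (flip i w) < 3" using lt w by simp
      moreover have "c (flip i w) \<noteq> c w" using pr[OF w i] .
      ultimately show "c (flip i w) = b \<or> c (flip i w) = b'"
        unfolding b'_def using three[of "c (flip i w)" b "c w"] False b cw by blast
    qed
    have "{i\<in>{..<d}. c (flip i w) \<noteq> b} = {i\<in>{..<d}. c (flip i w) = b'}"
    proof -
      have bb: "b' \<noteq> b" using three'[OF b cw] False unfolding b'_def by simp
      show ?thesis using nb bb by fastforce
    qed
    then have sum: "cnt c d b' w + cnt c d b w = d" using cnt_compl[of d c w b] by (simp add: cnt_def)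
    have z: "odd (cnt c d a w)" if "cnt c d a w > 0" for a
    proof -
      from that have "{i\<in>{..<d}. c (flip i w) = a} \<noteq> {}" unfolding cnt_def by (metis card.empty less_irrefl)
      then obtain i where "i < d" "c (flip i w) = a" by auto
      then show ?thesis using od[OF w] by blast
    qed
    show ?thesis
    proof (rule ccontr)
      assume "\<not> ?thesis"
      then have e: "even (cnt c d b w)" using False by simp
      then have "cnt c d b w = 0" using z by (meson not_gr0)
      then have "cnt c d b' w = d" using sum by simp
      then show False using z[of b'] ev d1 by simp
    qed
  qed
  define v :: "bool list" where "v = replicate d False"
  have lv: "length v = d" by (simp add: v_def)
  have E: "even (cnt c d b v)" if b: "b < 3" for b
  proof -
    define g where "g i j = (if c (flip j (flip i v)) = b then 1 else 0 :: nat)" for i j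
    have gs: "g i j = g j i" for i j
      by (cases "i = j") (auto simp: g_def flip_comm)
    have "(\<Sum>i<d. cnt c d b (flip i v)) = (\<Sum>i<d. \<Sum>j<d. g i j)"
      by (simp add: cnt_sum g_def)
    also have "\<dots> = (\<Sum>i<d. g i i) + 2 * (\<Sum>i<d. \<Sum>j<i. g i j)"
      by (rule sym_sum) (rule gs)
    also have "(\<Sum>i<d. g i i) = d * (if c v = b then 1 else 0)"
      by (simp add: g_def)
    finally have "even (\<Sum>i<d. cnt c d b (flip i v))" using ev by simp
    then have "even (card {i\<in>{..<d}. odd (cnt c d b (flip i v))})"
      by (simp add: even_sum_iff)
    also have "{i\<in>{..<d}. odd (cnt c d b (flip i v))} = {i\<in>{..<d}. c (flip i v) \<noteq> b}"
      using P[OF _ b] lv by auto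
    finally have "even (card {i\<in>{..<d}. c (flip i v) \<noteq> b})" .
    then show ?thesis using cnt_compl[of d c v b] ev by (metis even_add)
  qed
  have "c v = 0" using E[of 0] P[OF lv, of 0] by simp
  moreover have "c v = 1" using E[of 1] P[OF lv, of 1] by simp
  ultimately show False by simp
qed

definition wt :: "bool list \<Rightarrow> nat" where "wt xs = length (filter id xs)"

lemma wt_flip: "i < length xs \<Longrightarrow> even (wt (flip i xs)) \<longleftrightarrow> odd (wt xs)"
proof (induction xs arbitrary: i)
  case Nil then show ?case by simp
next
  case (Cons x xs)
  show ?case
  proof (cases i)
    case 0 then show ?thesis by (simp add: flip_def wt_def)
  next
    case (Suc j)
    then have "j < length xs" using Cons.prems by simp
    then have "even (wt (flip j xs)) \<longleftrightarrow> odd (wt xs)" by (rule Cons.IH)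
    moreover have "flip i (x # xs) = x # flip j xs" using Suc by (simp add: flip_def)
    ultimately show ?thesis by (simp add: wt_def)
  qed
qed

lemma upper_odd:
  assumes "odd d"
  shows "strong_odd_coloring (cube_vertices d) cube_adj (\<lambda>v. wt v mod 2)"
  unfolding so_iff
proof (rule allI, rule impI, rule conjI)
  fix v :: "bool list" assume l: "length v = d"
  have fl: "\<And>i. i < d \<Longrightarrow> wt (flip i v) mod 2 = 1 - wt v mod 2"
    using wt_flip l by (metis odd_iff_mod_2_eq_one even_iff_mod_2_eq_zero diff_zero diff_self_eq_0 One_nat_def)
  show "\<forall>i<d. wt (flip i v) mod 2 \<noteq> wt v mod 2"
    using fl by (metis One_nat_def diff_is_0_eq diff_zero even_iff_mod_2_eq_zero le_numeral_extra(4) odd_iff_mod_2_eq_one zero_neq_one)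
  show "\<forall>i<d. odd (card {j\<in>{..<d}. wt (flip j v) mod 2 = wt (flip i v) mod 2})"
  proof (intro allI impI)
    fix i assume "i < d"
    then have "{j\<in>{..<d}. wt (flip j v) mod 2 = wt (flip i v) mod 2} = {..<d}" using fl by auto
    then show "odd (card {j\<in>{..<d}. wt (flip j v) mod 2 = wt (flip i v) mod 2})" using assms by simp
  qed
qed

lemma upper_even:
  assumes "even d" "d \<ge> 1"
  shows "strong_odd_coloring (cube_vertices d) cube_adj (\<lambda>v. wt v mod 2 + 2 * (if v ! 0 then 1 else 0))"
  unfolding so_iff
proof (rule allI, rule impI, rule conjI)
  fix v :: "bool list" assume l: "length v = d"
  have fl: "\<And>i. i < d \<Longrightarrow> wt (flip i v) mod 2 = 1 - wt v mod 2"
    using wt_flip l by (metis odd_iff_mod_2_eq_one even_iff_mod_2_eq_zero diff_zero diff_self_eq_0 One_nat_def)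
  have f0: "\<And>i. flip i v ! 0 = (if i = 0 then \<not> v ! 0 else v ! 0)"
    using assms l by (simp add: flip_nth)
  show "\<forall>i<d. wt (flip i v) mod 2 + 2 * (if flip i v ! 0 then 1 else 0) \<noteq> wt v mod 2 + 2 * (if v ! 0 then 1 else 0)"
  proof (intro allI impI)
    fix i assume i: "i < d"
    have "wt (flip i v) mod 2 \<noteq> wt v mod 2" using fl[OF i]
      by (metis One_nat_def diff_is_0_eq diff_zero even_iff_mod_2_eq_zero le_numeral_extra(4) odd_iff_mod_2_eq_one zero_neq_one)
    then show "wt (flip i v) mod 2 + 2 * (if flip i v ! 0 then 1 else 0) \<noteq> wt v mod 2 + 2 * (if v ! 0 then 1 else 0)"
      by (metis (no_types, lifting) mod_mult_self2 mod_mod_trivial)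
  qed
  show "\<forall>i<d. odd (card {j\<in>{..<d}. wt (flip j v) mod 2 + 2 * (if flip j v ! 0 then 1 else 0) = wt (flip i v) mod 2 + 2 * (if flip i v ! 0 then 1 else 0)})"
  proof (intro allI impI)
    fix i assume i: "i < d"
    have eq: "{j\<in>{..<d}. wt (flip j v) mod 2 + 2 * (if flip j v ! 0 then 1 else 0) = wt (flip i v) mod 2 + 2 * (if flip i v ! 0 then 1 else 0)}
       = {j\<in>{..<d}. (j = 0) = (i = 0)}"
      using fl i f0 by auto
    show "odd (card {j\<in>{..<d}. wt (flip j v) mod 2 + 2 * (if flip j v ! 0 then 1 else 0) = wt (flip i v) mod 2 + 2 * (if flip i v ! 0 then 1 else 0)})"
    proof (cases "i = 0")
      case True
      then have "{j\<in>{..<d}. (j = 0) = (i = 0)} = {0}" using assms by auto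
      then show ?thesis unfolding eq by simp
    next
      case False
      then have "{j\<in>{..<d}. (j = 0) = (i = 0)} = {1..<d}" by auto
      then show ?thesis unfolding eq using assms by simp
    qed
  qed
qed

theorem proposition13:
  fixes d :: nat
  assumes "d \<ge> 1"
  shows "chi_so (cube_vertices d) cube_adj = (if odd d then 2 else 4)"
proof -
  define v :: "bool list" where "v = replicate d False"
  have lv: "length v = d" by (simp add: v_def)
  show ?thesis
  proof (cases "odd d")
    case True
    have "chi_so (cube_vertices d) cube_adj = 2"
      unfolding chi_so_def
    proof (rule Least_equality)
      show "\<exists>c :: bool list \<Rightarrow> nat. c ` cube_vertices d \<subseteq> {..<2} \<and> strong_odd_coloring (cube_vertices d) cube_adj c"
        by (rule exI[of _ "\<lambda>v. wt v mod 2"]) (use upper_odd[OF True] in auto)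
    next
      fix y assume "\<exists>c :: bool list \<Rightarrow> nat. c ` cube_vertices d \<subseteq> {..<y} \<and> strong_odd_coloring (cube_vertices d) cube_adj c"
      then obtain c :: "bool list \<Rightarrow> nat" where r: "c ` cube_vertices d \<subseteq> {..<y}" and so: "strong_odd_coloring (cube_vertices d) cube_adj c" by blast
      have "c (flip 0 v) \<noteq> c v" using so lv assms unfolding so_iff by auto
      moreover have "c v < y" "c (flip 0 v) < y" using r lv unfolding cube_vertices_def by (auto simp: image_subset_iff)
      ultimately show "2 \<le> y" by linarith
    qed
    then show ?thesis using True by simp
  next
    case False
    have "chi_so (cube_vertices d) cube_adj = 4"
      unfolding chi_so_def
    proof (rule Least_equality)
      show "\<exists>c :: bool list \<Rightarrow> nat. c ` cube_vertices d \<subseteq> {..<4} \<and> strong_odd_coloring (cube_vertices d) cube_adj c"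
        by (rule exI[of _ "\<lambda>v. wt v mod 2 + 2 * (if v ! 0 then 1 else 0)"]) (use upper_even[OF _ assms] False in auto)
    next
      fix y assume "\<exists>c :: bool list \<Rightarrow> nat. c ` cube_vertices d \<subseteq> {..<y} \<and> strong_odd_coloring (cube_vertices d) cube_adj c"
      then obtain c :: "bool list \<Rightarrow> nat" where r: "c ` cube_vertices d \<subseteq> {..<y}" and so: "strong_odd_coloring (cube_vertices d) cube_adj c" by blast
      show "4 \<le> y"
      proof (rule ccontr)
        assume "\<not> 4 \<le> y"
        then have "\<And>w. length w = d \<Longrightarrow> c w < 3" using r unfolding cube_vertices_def by (auto simp: image_subset_iff)
        then show False using no3[OF _ assms so] False by blast
      qed
    qed
    then show ?thesis using False by simp
  qed
qed

end
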